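(* Under Assumptions 1, 2, 4 and 5, the gradient descent iterates satisfy: (i) $\max_{1\le k\le L}\|W_k(t)\|_F$ is unbounded in $t$; (ii) $\sum_{t=0}^\infty\eta_t=\infty$; (iii) for every $R>0$, $\sum_{t:\,W(t)\in B(R)}\eta_t<\infty$.
   Context: Setting: data $(x_i,y_i)_{i=1}^n$ with $x_i\in\mathbb{R}^d$, $\|x_i\|\le 1$, $y_i\in\{-1,+1\}$; $z_i:=y_ix_i$; the data are linearly separable. A depth-$L$ linear network is $W=(W_L,\dots,W_1)$ with $W_k\in\mathbb{R}^{d_k\times d_{k-1}}$, $d_0=d$, $d_L=1$, $w_{\mathrm{prod}}:=(W_L\cdots W_1)^\top$, and $\mathcal{R}(W)=\frac1n\sum_{i=1}^n\ell(\langle w_{\mathrm{prod}},z_i\rangle)$. $B(R):=\{W:\max_k\|W_k\|_F\le R\}$. Gradient descent: $W(t+1)=W(t)-\eta_t\nabla\mathcal{R}(W(t))$, $t=0,1,2,\dots$. Assumption 1: $\ell$ is continuously differentiable, $\ell'<0$ everywhere, $\lim_{x\to-\infty}\ell(x)=\infty$, $\lim_{x\to\infty}\ell(x)=0$. Assumption 2: $\nabla\mathcal{R}(W(0))\ne0$ and $\mathcal{R}(W(0))\le\ell(0)$. Assumption 4: $\ell'$ is $\beta$-Lipschitz and $|\ell'|\le G$. Let $\beta(R):=2L^2R^{2L-2}(\beta+G)$. Assumption 5: $\eta_t=\min\{1/\beta(R_t),1\}$, where the radii $R_t$ satisfy $W(t)\in B(R_t-1)$ for every $t$, and $R_{t+1}=R_t$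 whenever $W(t+1)\in B(R_t-1)$. *)

theory Defs
  imports "HOL-Analysis.Analysis"
begin

text \<open>Parameters of a depth-L linear network are represented as
  W :: nat => nat => nat => real, where W k i j is entry (i,j) of layer k
  (1 <= k <= L, i < dims k, j < dims (k-1)).  Data: x i j is coordinate j of
  sample x_i (i < n, j < dims 0), y i its label.\<close>

type_synonym params = "nat \<Rightarrow> nat \<Rightarrow> nat \<Rightarrow> real"

fun prodW :: "(nat \<Rightarrow> nat) \<Rightarrow> params \<Rightarrow> nat \<Rightarrow> nat \<Rightarrow> nat \<Rightarrow> real" where
  "prodW dims W 0 = (\<lambda>i j. if i = j then 1 else 0)"
| "prodW dims W (Suc k) = (\<lambda>i j. \<Sum>m<dims k. W (Suc k) i m * prodW dims W k m j)"

text \<open>w_prod = (W_L ... W_1)^T, a vector in R^(dims 0).\<close>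
definition wprod :: "(nat \<Rightarrow> nat) \<Rightarrow> nat \<Rightarrow> params \<Rightarrow> nat \<Rightarrow> real" where
  "wprod dims L W j = prodW dims W L 0 j"

definition risk :: "(real \<Rightarrow> real) \<Rightarrow> nat \<Rightarrow> (nat \<Rightarrow> nat \<Rightarrow> real) \<Rightarrow> (nat \<Rightarrow> real)
    \<Rightarrow> (nat \<Rightarrow> nat) \<Rightarrow> nat \<Rightarrow> params \<Rightarrow> real" where
  "risk loss n x y dims L W =
     (1 / real n) * (\<Sum>i<n. loss (\<Sum>j<dims 0. wprod dims L W j * (y i * x i j)))"

definition perturb :: "params \<Rightarrow> nat \<Rightarrow> nat \<Rightarrow> nat \<Rightarrow> real \<Rightarrow> params" where
  "perturb W k i j s = (\<lambda>k' i' j'. if k' = k \<and> i' = i \<and> j' = j then W k i j + s else W k' i' j')"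

definition gradP :: "(params \<Rightarrow> real) \<Rightarrow> params \<Rightarrow> params" where
  "gradP F W = (\<lambda>k i j. deriv (\<lambda>s. F (perturb W k i j s)) 0)"

definition frob :: "(nat \<Rightarrow> nat) \<Rightarrow> params \<Rightarrow> nat \<Rightarrow> real" where
  "frob dims W k = sqrt (\<Sum>i<dims k. \<Sum>j<dims (k - 1). (W k i j)\<^sup>2)"

definition maxfrob :: "(nat \<Rightarrow> nat) \<Rightarrow> nat \<Rightarrow> params \<Rightarrow> real" where
  "maxfrob dims L W = Max ((\<lambda>k. frob dims W k) ` {1..L})"

definition inBall :: "(nat \<Rightarrow> nat) \<Rightarrow> nat \<Rightarrow> params \<Rightarrow> real \<Rightarrow> bool" where
  "inBall dims L W R \<longleftrightarrow> (\<forall>k\<in>{1..L}. frob dims W k \<le> R)"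

definition betaR :: "nat \<Rightarrow> real \<Rightarrow> real \<Rightarrow> real \<Rightarrow> real" where
  "betaR L b G R = 2 * real L ^ 2 * R ^ (2 * L - 2) * (b + G)"

end

theory Submission
  imports Defs
begin

definition addp :: "params \<Rightarrow> real \<Rightarrow> params \<Rightarrow> params" where
  "addp W s D = (\<lambda>k i j. W k i j + s * D k i j)"

fun vecW :: "(nat \<Rightarrow> nat) \<Rightarrow> params \<Rightarrow> (nat \<Rightarrow> real) \<Rightarrow> nat \<Rightarrow> nat \<Rightarrow> real" where
  "vecW dims W z 0 = z"
| "vecW dims W z (Suc k) = (\<lambda>i. \<Sum>m<dims k. W (Suc k) i m * vecW dims W z k m)"

fun dvec :: "(nat \<Rightarrow> nat) \<Rightarrow> params \<Rightarrow> params \<Rightarrow> (nat \<Rightarrow> real) \<Rightarrow> nat \<Rightarrow> nat \<Rightarrow> real" where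
  "dvec dims W D z 0 = (\<lambda>i. 0)"
| "dvec dims W D z (Suc k) = (\<lambda>i. \<Sum>m<dims k. D (Suc k) i m * vecW dims W z k m + W (Suc k) i m * dvec dims W D z k m)"

fun d2vec :: "(nat \<Rightarrow> nat) \<Rightarrow> params \<Rightarrow> params \<Rightarrow> (nat \<Rightarrow> real) \<Rightarrow> nat \<Rightarrow> nat \<Rightarrow> real" where
  "d2vec dims W D z 0 = (\<lambda>i. 0)"
| "d2vec dims W D z (Suc k) = (\<lambda>i. \<Sum>m<dims k. 2 * D (Suc k) i m * dvec dims W D z k m + W (Suc k) i m * d2vec dims W D z k m)"

lemma vecW_deriv:
  "((\<lambda>s. vecW dims (addp W s D) z k i) has_real_derivative dvec dims (addp W s D) D z k i) (at s)"
proof (induction k arbitrary: i)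
  case 0 then show ?case by simp
next
  case (Suc k)
  show ?case unfolding vecW.simps dvec.simps
    apply (rule DERIV_sum)
    apply (unfold addp_def)
    apply (rule derivative_eq_intros Suc[unfolded addp_def] | simp)+
    done
qed

lemma dvec_deriv:
  "((\<lambda>s. dvec dims (addp W s D) D z k i) has_real_derivative d2vec dims (addp W s D) D z k i) (at s)"
proof (induction k arbitrary: i)
  case 0 then show ?case by simp
next
  case (Suc k)
  show ?case unfolding dvec.simps d2vec.simps
    apply (rule DERIV_sum)
    apply (unfold addp_def)
    apply (rule derivative_eq_intros Suc[unfolded addp_def] vecW_deriv[unfolded addp_def] | simp)+
    done
qed

lemma prodW_vecW:
  "i < dims k \<Longrightarrow> (\<Sum>j<dims 0. prodW dims W k i j * z j) = vecW dims W z k i"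
proof (induction k arbitrary: i)
  case 0
  have "\<And>j. (if i = j then 1 else 0) * z j = (if i = j then z i else 0)" by simp
  then show ?case using 0 by simp
next
  case (Suc k)
  have "(\<Sum>j<dims 0. prodW dims W (Suc k) i j * z j)
      = (\<Sum>m<dims k. W (Suc k) i m * (\<Sum>j<dims 0. prodW dims W k m j * z j))"
    by (simp add: sum_distrib_left sum_distrib_right mult.assoc sum.swap[of _ "{..<dims 0}"])
  also have "\<dots> = vecW dims W z (Suc k) i" using Suc.IH by simp
  finally show ?case .
qed

definition Ep :: "nat \<Rightarrow> nat \<Rightarrow> nat \<Rightarrow> params" where
  "Ep k i j = (\<lambda>k' i' j'. if k' = k \<and> i' = i \<and> j' = j then 1 else 0)"

lemma dvec_zero:
  "(\<And>k' i j. k' \<le> K \<Longrightarrow> D k' i j = 0) \<Longrightarrow> dvec dims W D z K m = 0"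
proof (induction K arbitrary: m)
  case 0 then show ?case by simp
next
  case (Suc K)
  have "dvec dims W D z K m' = 0" for m' using Suc by auto
  then show ?case using Suc.prems by simp
qed

lemma dvec_lin:
  "i < dims K \<Longrightarrow> dvec dims W D z K i =
     (\<Sum>k\<in>{1..K}. \<Sum>i'<dims k. \<Sum>j<dims (k-1). D k i' j * dvec dims W (Ep k i' j) z K i)"
proof (induction K arbitrary: i)
  case 0 then show ?case by simp
next
  case (Suc K)
  define F where "F k = (\<Sum>i'<dims k. \<Sum>j<dims (k-1). D k i' j * dvec dims W (Ep k i' j) z (Suc K) i)" for k
  have top: "F (Suc K) = (\<Sum>j<dims K. D (Suc K) i j * vecW dims W z K j)"
  proof -
    have z0: "dvec dims W (Ep (Suc K) i' j) z K m = 0" for i' j m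
      by (rule dvec_zero) (auto simp: Ep_def)
    have e: "dvec dims W (Ep (Suc K) i' j) z (Suc K) i = (if i' = i then vecW dims W z K j else 0)"
      if "j < dims K" for i' j
    proof -
      have "dvec dims W (Ep (Suc K) i' j) z (Suc K) i
          = (\<Sum>m<dims K. (if m = j then (if i' = i then vecW dims W z K j else 0) else 0))"
        unfolding dvec.simps z0 by (intro sum.cong) (auto simp: Ep_def)
      also have "\<dots> = (if i' = i then vecW dims W z K j else 0)" using that by simp
      finally show ?thesis .
    qed
    have "F (Suc K) = (\<Sum>i'<dims (Suc K). \<Sum>j<dims K. (if i' = i then D (Suc K) i j * vecW dims W z K j else 0))"
      unfolding F_def by (intro sum.cong refl) (auto simp del: dvec.simps simp: e)
    also have "\<dots> = (\<Sum>i'<dims (Suc K). (if i' = i then (\<Sum>j<dims K. D (Suc K) i j * vecW dims W z K j) else 0))"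
      by (intro sum.cong refl) auto
    also have "\<dots> = (\<Sum>j<dims K. D (Suc K) i j * vecW dims W z K j)" using Suc.prems by simp
    finally show ?thesis .
  qed
  have low: "(\<Sum>k\<in>{1..K}. F k) = (\<Sum>m<dims K. W (Suc K) i m * dvec dims W D z K m)"
  proof -
    have e: "dvec dims W (Ep k i' j) z (Suc K) i = (\<Sum>m<dims K. W (Suc K) i m * dvec dims W (Ep k i' j) z K m)"
      if "k \<in> {1..K}" for k i' j
      using that by (simp add: Ep_def)
    have "(\<Sum>k\<in>{1..K}. F k) = (\<Sum>k\<in>{1..K}. \<Sum>i'<dims k. \<Sum>j<dims (k-1). \<Sum>m<dims K.
             W (Suc K) i m * (D k i' j * dvec dims W (Ep k i' j) z K m))"
      unfolding F_def by (intro sum.cong refl) (simp del: dvec.simps add: e sum_distrib_left mult.left_commute)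
    also have "\<dots> = (\<Sum>m<dims K. W (Suc K) i m * (\<Sum>k\<in>{1..K}. \<Sum>i'<dims k. \<Sum>j<dims (k-1).
             D k i' j * dvec dims W (Ep k i' j) z K m))"
      by (simp add: sum_distrib_left sum.swap[of _ "{..<dims K}"])
    also have "\<dots> = (\<Sum>m<dims K. W (Suc K) i m * dvec dims W D z K m)"
      using Suc.IH by simp
    finally show ?thesis .
  qed
  have "(\<Sum>k\<in>{1..Suc K}. F k) = (\<Sum>k\<in>{1..K}. F k) + F (Suc K)"
    by (simp add: sum.cl_ivl_Suc)
  also have "\<dots> = dvec dims W D z (Suc K) i"
    unfolding low top by (simp add: sum.distrib)
  finally show ?case unfolding F_def by simp
qed

definition zz :: "(nat \<Rightarrow> real) \<Rightarrow> (nat \<Rightarrow> nat \<Rightarrow> real) \<Rightarrow> nat \<Rightarrow> nat \<Rightarrow> real" where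
  "zz y x a = (\<lambda>j. y a * x a j)"

definition SS :: "(nat \<Rightarrow> nat) \<Rightarrow> nat \<Rightarrow> (nat \<Rightarrow> nat \<Rightarrow> nat \<Rightarrow> real) \<Rightarrow> real" where
  "SS dims L f = (\<Sum>k\<in>{1..L}. \<Sum>i<dims k. \<Sum>j<dims (k-1). f k i j)"

definition dd where
  "dd loss' n x y dims L W D = (1 / real n) * (\<Sum>a<n. loss' (vecW dims W (zz y x a) L 0) * dvec dims W D (zz y x a) L 0)"

lemma risk_vec: "dims L = 1 \<Longrightarrow>
  risk loss n x y dims L W = (1/real n) * (\<Sum>a<n. loss (vecW dims W (zz y x a) L 0))"
  unfolding risk_def wprod_def zz_def
  using prodW_vecW[of 0 dims L W] by (simp add: mult.assoc)

lemma risk_deriv: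
  assumes "\<forall>s. (loss has_real_derivative loss' s) (at s)" "dims L = 1"
  shows "((\<lambda>s. risk loss n x y dims L (addp W s D)) has_real_derivative
            dd loss' n x y dims L (addp W s D) D) (at s)"
  unfolding risk_vec[of dims L, OF assms(2)] dd_def
  apply (intro DERIV_cmult DERIV_sum)
  apply (rule DERIV_chain2[where f = loss, OF _ vecW_deriv])
  using assms(1) by auto

lemma addp0[simp]: "addp W 0 D = W" by (simp add: addp_def)

lemma perturb_addp: "perturb W k i j s = addp W s (Ep k i j)"
  by (auto simp: perturb_def addp_def Ep_def fun_eq_iff)

lemma gradP_eq:
  assumes "\<forall>s. (loss has_real_derivative loss' s) (at s)" "dims L = 1"
  shows "gradP (risk loss n x y dims L) W k i j = dd loss' n x y dims L W (Ep k i j)"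
  unfolding gradP_def perturb_addp
  using risk_deriv[where loss=loss and loss'=loss' and dims=dims and L=L and n=n and x=x and y=y and W=W and D="Ep k i j" and s=0, OF assms] DERIV_imp_deriv by fastforce

lemma sum_swap3:
  "(\<Sum>a\<in>A. \<Sum>k\<in>B. \<Sum>i\<in>C k. \<Sum>j\<in>E k. f a k i j) = (\<Sum>k\<in>B. \<Sum>i\<in>C k. \<Sum>j\<in>E k. \<Sum>a\<in>A. f a k i j)"
proof -
  have "(\<Sum>a\<in>A. \<Sum>k\<in>B. \<Sum>i\<in>C k. \<Sum>j\<in>E k. f a k i j) = (\<Sum>k\<in>B. \<Sum>a\<in>A. \<Sum>i\<in>C k. \<Sum>j\<in>E k. f a k i j)"
    by (rule sum.swap)
  also have "\<dots> = (\<Sum>k\<in>B. \<Sum>i\<in>C k. \<Sum>a\<in>A. \<Sum>j\<in>E k. f a k i j)"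
    by (intro sum.cong refl sum.swap)
  also have "\<dots> = (\<Sum>k\<in>B. \<Sum>i\<in>C k. \<Sum>j\<in>E k. \<Sum>a\<in>A. f a k i j)"
    by (intro sum.cong refl sum.swap)
  finally show ?thesis .
qed

lemma dd_lin:
  assumes "\<forall>s. (loss has_real_derivative loss' s) (at s)" "dims L = 1"
  shows "dd loss' n x y dims L W D = SS dims L (\<lambda>k i j. D k i j * gradP (risk loss n x y dims L) W k i j)"
proof -
  have "dd loss' n x y dims L W D = (1 / real n) * (\<Sum>a<n. loss' (vecW dims W (zz y x a) L 0) *
     (\<Sum>k\<in>{1..L}. \<Sum>i'<dims k. \<Sum>j<dims (k-1). D k i' j * dvec dims W (Ep k i' j) (zz y x a) L 0))"
    unfolding dd_def using dvec_lin[of 0 dims L W D] assms(2) by (simp del: dvec.simps)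
  also have "\<dots> = SS dims L (\<lambda>k i j. D k i j * dd loss' n x y dims L W (Ep k i j))"
  proof -
    have "(1 / real n) * (\<Sum>a<n. loss' (vecW dims W (zz y x a) L 0) *
     (\<Sum>k\<in>{1..L}. \<Sum>i'<dims k. \<Sum>j<dims (k-1). D k i' j * dvec dims W (Ep k i' j) (zz y x a) L 0))
      = (\<Sum>a<n. \<Sum>k\<in>{1..L}. \<Sum>i'<dims k. \<Sum>j<dims (k-1). D k i' j * ((1 / real n) * (loss' (vecW dims W (zz y x a) L 0) * dvec dims W (Ep k i' j) (zz y x a) L 0)))"
      by (simp add: sum_distrib_left mult_ac)
    also have "\<dots> = SS dims L (\<lambda>k i j. D k i j * dd loss' n x y dims L W (Ep k i j))"
      unfolding sum_swap3 SS_def dd_def by (simp add: sum_distrib_left)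
    finally show ?thesis .
  qed
  finally show ?thesis using gradP_eq[where loss=loss and loss'=loss' and dims=dims and L=L and n=n and x=x and y=y and W=W, OF assms] by simp
qed


definition nv :: "nat \<Rightarrow> (nat \<Rightarrow> real) \<Rightarrow> real" where
  "nv a v = L2_set v {..<a}"

lemma nv_nonneg[simp]: "0 \<le> nv a v" by (simp add: nv_def)

lemma nv_sq: "(nv a v)\<^sup>2 = (\<Sum>i<a. (v i)\<^sup>2)"
  by (simp add: nv_def L2_set_def sum_nonneg)

lemma nv_add: "nv a (\<lambda>i. u i + v i) \<le> nv a u + nv a v"
  unfolding nv_def by (rule L2_set_triangle_ineq)

lemma nv_scale: "0 \<le> c \<Longrightarrow> nv a (\<lambda>i. c * v i) = c * nv a v"
  unfolding nv_def by (simp add: L2_set_right_distrib)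

lemma nv_abs0: "0 < a \<Longrightarrow> \<bar>v 0\<bar> \<le> nv a v"
proof -
  assume "0 < a"
  then have "\<bar>v 0\<bar> \<le> L2_set (\<lambda>i. \<bar>v i\<bar>) {..<a}" by (intro member_le_L2_set) auto
  then show ?thesis by (simp add: nv_def L2_set_def)
qed

lemma frob_sq: "(frob dims W k)\<^sup>2 = (\<Sum>i<dims k. \<Sum>j<dims (k-1). (W k i j)\<^sup>2)"
  by (simp add: frob_def sum_nonneg)

lemma frob_nonneg[simp]: "0 \<le> frob dims W k" by (simp add: frob_def sum_nonneg)

lemma matvec:
  "nv (dims (Suc k)) (\<lambda>i. \<Sum>m<dims k. W (Suc k) i m * v m) \<le> frob dims W (Suc k) * nv (dims k) v"
proof -
  have "(nv (dims (Suc k)) (\<lambda>i. \<Sum>m<dims k. W (Suc k) i m * v m))\<^sup>2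
      = (\<Sum>i<dims (Suc k). (\<Sum>m<dims k. W (Suc k) i m * v m)\<^sup>2)" by (simp add: nv_sq)
  also have "\<dots> \<le> (\<Sum>i<dims (Suc k). (\<Sum>m<dims k. (W (Suc k) i m)\<^sup>2) * (\<Sum>m<dims k. (v m)\<^sup>2))"
    by (intro sum_mono Cauchy_Schwarz_ineq_sum)
  also have "\<dots> = (frob dims W (Suc k) * nv (dims k) v)\<^sup>2"
    by (simp add: power_mult_distrib frob_sq nv_sq sum_distrib_right)
  finally show ?thesis
    by (rule power2_le_imp_le) (simp)
qed

definition Sd :: "(nat \<Rightarrow> nat) \<Rightarrow> params \<Rightarrow> nat \<Rightarrow> real" where
  "Sd dims D K = (\<Sum>k\<in>{1..K}. frob dims D k)"

lemma Sd_nonneg[simp]: "0 \<le> Sd dims D K" by (simp add: Sd_def sum_nonneg)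
lemma Sd_Suc: "Sd dims D (Suc K) = Sd dims D K + frob dims D (Suc K)"
  by (simp add: Sd_def sum.cl_ivl_Suc)
lemma Sd_0[simp]: "Sd dims D 0 = 0" by (simp add: Sd_def)

lemma vec_bound:
  assumes "\<And>k. 1 \<le> k \<Longrightarrow> k \<le> K \<Longrightarrow> frob dims W k \<le> R"
  shows "nv (dims K) (vecW dims W z K) \<le> R^K * nv (dims 0) z"
  using assms
proof (induction K)
  case 0 then show ?case by simp
next
  case (Suc K)
  have R: "frob dims W (Suc K) \<le> R" using Suc.prems by auto
  have IH: "nv (dims K) (vecW dims W z K) \<le> R^K * nv (dims 0) z" using Suc by auto
  have "nv (dims (Suc K)) (vecW dims W z (Suc K)) \<le> frob dims W (Suc K) * nv (dims K) (vecW dims W z K)"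
    using matvec by simp
  also have "\<dots> \<le> R * (R^K * nv (dims 0) z)"
    using R IH order_trans[OF frob_nonneg R] by (intro mult_mono) auto
  finally show ?case by simp
qed

lemma Rpow_mono: "1 \<le> (R::real) \<Longrightarrow> R * (S * R^(K-1)) \<le> S * R^K \<or> S = 0 \<Longrightarrow> True" by simp

lemma dvec_bound:
  assumes "\<And>k. 1 \<le> k \<Longrightarrow> k \<le> K \<Longrightarrow> frob dims W k \<le> R" "1 \<le> R"
  shows "nv (dims K) (dvec dims W D z K) \<le> Sd dims D K * R^(K-1) * nv (dims 0) z"
  using assms
proof (induction K)
  case 0 then show ?case by (simp add: nv_def L2_set_def)
next
  case (Suc K)
  have R: "frob dims W (Suc K) \<le> R" using Suc.prems by auto
  have IH: "nv (dims K) (dvec dims W D z K) \<le> Sd dims D K * R^(K-1) * nv (dims 0) z" using Suc by auto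
  have V: "nv (dims K) (vecW dims W z K) \<le> R^K * nv (dims 0) z"
    by (rule vec_bound) (use Suc.prems in auto)
  have "nv (dims (Suc K)) (dvec dims W D z (Suc K))
      \<le> nv (dims (Suc K)) (\<lambda>i. \<Sum>m<dims K. D (Suc K) i m * vecW dims W z K m)
        + nv (dims (Suc K)) (\<lambda>i. \<Sum>m<dims K. W (Suc K) i m * dvec dims W D z K m)"
    using nv_add[of "dims (Suc K)" "\<lambda>i. \<Sum>m<dims K. D (Suc K) i m * vecW dims W z K m"
       "\<lambda>i. \<Sum>m<dims K. W (Suc K) i m * dvec dims W D z K m"]
    by (simp add: sum.distrib)
  also have "\<dots> \<le> frob dims D (Suc K) * nv (dims K) (vecW dims W z K) + frob dims W (Suc K) * nv (dims K) (dvec dims W D z K)"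
    by (intro add_mono matvec)
  also have "\<dots> \<le> frob dims D (Suc K) * (R^K * nv (dims 0) z) + R * (Sd dims D K * R^(K-1) * nv (dims 0) z)"
    using R IH V order_trans[OF frob_nonneg R] by (intro add_mono mult_mono) auto
  also have "\<dots> \<le> frob dims D (Suc K) * (R^K * nv (dims 0) z) + Sd dims D K * R^K * nv (dims 0) z"
  proof (cases K)
    case 0 then show ?thesis by simp
  next
    case (Suc K') then show ?thesis by (simp add: mult_ac)
  qed
  also have "\<dots> = Sd dims D (Suc K) * R^(Suc K - 1) * nv (dims 0) z"
    by (simp add: Sd_Suc algebra_simps)
  finally show ?case .
qed

lemma d2vec_bound:
  assumes "\<And>k. 1 \<le> k \<Longrightarrow> k \<le> K \<Longrightarrow> frob dims W k \<le> R" "1 \<le> R"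
  shows "nv (dims K) (d2vec dims W D z K) \<le> (Sd dims D K)\<^sup>2 * R^(K-1) * nv (dims 0) z"
  using assms
proof (induction K)
  case 0 then show ?case by (simp add: nv_def L2_set_def)
next
  case (Suc K)
  have R: "frob dims W (Suc K) \<le> R" using Suc.prems by auto
  have IH: "nv (dims K) (d2vec dims W D z K) \<le> (Sd dims D K)\<^sup>2 * R^(K-1) * nv (dims 0) z" using Suc by auto
  have V: "nv (dims K) (dvec dims W D z K) \<le> Sd dims D K * R^(K-1) * nv (dims 0) z"
    by (rule dvec_bound) (use Suc.prems in auto)
  have e: "d2vec dims W D z (Suc K) = (\<lambda>i. 2 * (\<Sum>m<dims K. D (Suc K) i m * dvec dims W D z K m)
       + (\<Sum>m<dims K. W (Suc K) i m * d2vec dims W D z K m))"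
    by (simp add: sum.distrib sum_distrib_left mult.assoc)
  have "nv (dims (Suc K)) (d2vec dims W D z (Suc K))
      \<le> nv (dims (Suc K)) (\<lambda>i. 2 * (\<Sum>m<dims K. D (Suc K) i m * dvec dims W D z K m))
        + nv (dims (Suc K)) (\<lambda>i. \<Sum>m<dims K. W (Suc K) i m * d2vec dims W D z K m)"
    unfolding e by (rule nv_add)
  also have "\<dots> \<le> 2 * (frob dims D (Suc K) * nv (dims K) (dvec dims W D z K)) + frob dims W (Suc K) * nv (dims K) (d2vec dims W D z K)"
    by (intro add_mono matvec) (auto simp: nv_scale intro: matvec)
  also have "\<dots> \<le> 2 * (frob dims D (Suc K) * (Sd dims D K * R^(K-1) * nv (dims 0) z)) + R * ((Sd dims D K)\<^sup>2 * R^(K-1) * nv (dims 0) z)"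
    using R IH V order_trans[OF frob_nonneg R] by (intro add_mono mult_mono mult_left_mono) auto
  also have "\<dots> \<le> 2 * (frob dims D (Suc K) * (Sd dims D K * R^K * nv (dims 0) z)) + (Sd dims D K)\<^sup>2 * R^K * nv (dims 0) z"
  proof (cases K)
    case 0 then show ?thesis by simp
  next
    case (Suc K')
    have "R^K' \<le> R * R^K'" using Suc.prems(2) by (simp add: mult_le_cancel_right1)
    then have "R^K' * (nv (dims 0) z * (Sd dims D K * frob dims D (Suc K))) \<le> (R * R^K') * (nv (dims 0) z * (Sd dims D K * frob dims D (Suc K)))"
      by (intro mult_right_mono) auto
    then show ?thesis using Suc by (auto simp: mult_ac)
  qed
  also have "\<dots> \<le> (Sd dims D (Suc K))\<^sup>2 * R^(Suc K - 1) * nv (dims 0) z"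
  proof -
    have "0 \<le> (frob dims D (Suc K))^2 * R^K * nv (dims 0) z" using Suc.prems(2) by simp
    then show ?thesis by (simp add: Sd_Suc power2_eq_square algebra_simps)
  qed
  finally show ?case .
qed


lemma frob_addp: "frob dims (addp W s D) k \<le> frob dims W k + \<bar>s\<bar> * frob dims D k"
proof -
  have e: "frob dims V k = L2_set (\<lambda>p. V k (fst p) (snd p)) ({..<dims k} \<times> {..<dims (k-1)})" for V
    unfolding frob_def L2_set_def by (simp add: sum.cartesian_product case_prod_beta)
  have s: "L2_set (\<lambda>p. s * D k (fst p) (snd p)) A = \<bar>s\<bar> * L2_set (\<lambda>p. D k (fst p) (snd p)) A" for A
  proof -
    have "L2_set (\<lambda>p. s * D k (fst p) (snd p)) A = L2_set (\<lambda>p. \<bar>s\<bar> * D k (fst p) (snd p)) A"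
      unfolding L2_set_def by (simp add: power_mult_distrib)
    then show ?thesis by (simp add: L2_set_right_distrib)
  qed
  show ?thesis unfolding e addp_def
    using L2_set_triangle_ineq[of "\<lambda>p. W k (fst p) (snd p)" "\<lambda>p. s * D k (fst p) (snd p)"] s by simp
qed

lemma frob_neg[simp]: "frob dims (\<lambda>k i j. - g k i j) k = frob dims g k"
  by (simp add: frob_def)

lemma mvt_bound:
  fixes f f' :: "real \<Rightarrow> real"
  assumes "0 \<le> b" "\<And>s. 0 \<le> s \<Longrightarrow> s \<le> b \<Longrightarrow> (f has_real_derivative f' s) (at s)"
    "\<And>s. 0 \<le> s \<Longrightarrow> s \<le> b \<Longrightarrow> \<bar>f' s\<bar> \<le> B"
  shows "\<bar>f b - f 0\<bar> \<le> b * B"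
proof (cases "b = 0")
  case True then show ?thesis by simp
next
  case False
  then have "0 < b" using assms(1) by simp
  from MVT2[OF this assms(2)] obtain z where z: "0 < z" "z < b" "f b - f 0 = (b - 0) * f' z" by auto
  then have "\<bar>f b - f 0\<bar> = b * \<bar>f' z\<bar>" using assms(1) by (simp add: abs_mult)
  also have "\<dots> \<le> b * B" using assms(3)[of z] z assms(1) by (intro mult_left_mono) auto
  finally show ?thesis .
qed

lemma Sd_cs: "(Sd dims D L)\<^sup>2 \<le> real L * (\<Sum>k\<in>{1..L}. (frob dims D k)\<^sup>2)"
  using Cauchy_Schwarz_ineq_sum[of "\<lambda>_. 1" "frob dims D" "{1..L}"] by (simp add: Sd_def)

lemma sum_frob_sq: "(\<Sum>k\<in>{1..L}. (frob dims D k)\<^sup>2) = SS dims L (\<lambda>k i j. (D k i j)\<^sup>2)"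
  by (simp add: SS_def frob_sq)

locale net =
  fixes n L :: nat and dims :: "nat \<Rightarrow> nat"
    and x :: "nat \<Rightarrow> nat \<Rightarrow> real" and y :: "nat \<Rightarrow> real"
    and loss loss' :: "real \<Rightarrow> real" and \<beta> G :: real
  assumes L: "L \<ge> 1" and dimL: "dims L = 1"
    and zn: "\<forall>a<n. nv (dims 0) (zz y x a) \<le> 1"
    and loss_deriv: "\<forall>s. (loss has_real_derivative loss' s) (at s)"
    and lip: "\<forall>a b. \<bar>loss' a - loss' b\<bar> \<le> \<beta> * \<bar>a - b\<bar>"
    and bnd: "\<forall>a. \<bar>loss' a\<bar> \<le> G"
begin

lemma G_nonneg: "0 \<le> G" using bnd by (meson abs_ge_zero order_trans)
lemma beta_nonneg: "0 \<le> \<beta>" using lip[rule_format, of 1 0] by (smt (verit) zero_le_mult_iff abs_ge_zero)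

lemma dd_bound:
  assumes "\<And>k. 1 \<le> k \<Longrightarrow> k \<le> L \<Longrightarrow> frob dims W k \<le> R" "1 \<le> R"
  shows "\<bar>dd loss' n x y dims L W D\<bar> \<le> G * Sd dims D L * R^(L-1)"
proof -
  have t: "\<bar>loss' (vecW dims W (zz y x a) L 0) * dvec dims W D (zz y x a) L 0\<bar> \<le> G * Sd dims D L * R^(L-1)"
    if "a < n" for a
  proof -
    have "\<bar>dvec dims W D (zz y x a) L 0\<bar> \<le> nv (dims L) (dvec dims W D (zz y x a) L)"
      using dimL by (intro nv_abs0) auto
    also have "\<dots> \<le> Sd dims D L * R^(L-1) * nv (dims 0) (zz y x a)"
      by (rule dvec_bound) (use assms in auto)
    also have "\<dots> \<le> Sd dims D L * R^(L-1)"
      using zn that assms(2) by (intro mult_left_le) auto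
    finally have "\<bar>dvec dims W D (zz y x a) L 0\<bar> \<le> Sd dims D L * R^(L-1)" .
    then show ?thesis
      unfolding abs_mult using bnd G_nonneg by (simp add: mult.assoc mult_mono)
  qed
  show ?thesis
  proof (cases "n = 0")
    case True then show ?thesis using G_nonneg assms(2) by (simp add: dd_def)
  next
    case False
    have "\<bar>dd loss' n x y dims L W D\<bar> \<le> (1/real n) * (\<Sum>a<n. \<bar>loss' (vecW dims W (zz y x a) L 0) * dvec dims W D (zz y x a) L 0\<bar>)"
      unfolding dd_def abs_mult[of "1/real n"] by (simp add: sum_abs divide_right_mono del: abs_mult)
    also have "\<dots> \<le> (1/real n) * (\<Sum>a<n. G * Sd dims D L * R^(L-1))"
      using t by (intro mult_left_mono sum_mono) auto
    also have "\<dots> = G * Sd dims D L * R^(L-1)" using False by simp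
    finally show ?thesis .
  qed
qed

lemma ddl: "dd loss' n x y dims L W D = SS dims L (\<lambda>k i j. D k i j * gradP (risk loss n x y dims L) W k i j)"
  using dd_lin[where loss=loss and loss'=loss' and dims=dims and L=L and n=n and x=x and y=y and W=W and D=D] loss_deriv dimL by blast

lemma rd: "((\<lambda>s. risk loss n x y dims L (addp W s D)) has_real_derivative
            dd loss' n x y dims L (addp W s D) D) (at s)"
  using risk_deriv[where loss=loss and loss'=loss' and dims=dims and L=L and n=n and x=x and y=y and W=W and D=D and s=s] loss_deriv dimL by blast

lemma grad_layer_bound:
  assumes "\<And>k. 1 \<le> k \<Longrightarrow> k \<le> L \<Longrightarrow> frob dims W k \<le> R" "1 \<le> R" "1 \<le> k" "k \<le> L"
  shows "frob dims (gradP (risk loss n x y dims L) W) k \<le> G * R^(L-1)"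
proof -
  define g where "g = gradP (risk loss n x y dims L) W"
  define Dm where "Dm = (\<lambda>k' i j. if k' = k then g k' i j else 0)"
  have "dd loss' n x y dims L W Dm = SS dims L (\<lambda>k' i j. Dm k' i j * g k' i j)"
    unfolding g_def by (rule ddl)
  also have "\<dots> = (\<Sum>k'\<in>{1..L}. if k' = k then (frob dims g k)\<^sup>2 else 0)"
    unfolding SS_def Dm_def frob_sq by (intro sum.cong refl) (simp add: power2_eq_square)
  also have "\<dots> = (frob dims g k)\<^sup>2" using assms(3,4) by simp
  finally have e1: "dd loss' n x y dims L W Dm = (frob dims g k)\<^sup>2" .
  have "Sd dims Dm L = (\<Sum>k'\<in>{1..L}. if k' = k then frob dims g k else 0)"
    unfolding Sd_def Dm_def by (intro sum.cong refl) (simp add: frob_def)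
  also have "\<dots> = frob dims g k" using assms(3,4) by simp
  finally have e2: "Sd dims Dm L = frob dims g k" .
  have "(frob dims g k)\<^sup>2 \<le> G * frob dims g k * R^(L-1)"
    using dd_bound[OF assms(1,2), of Dm] e1 e2 by simp
  then have "frob dims g k * frob dims g k \<le> (G * R^(L-1)) * frob dims g k"
    by (simp add: power2_eq_square mult_ac)
  then have "frob dims g k \<le> G * R^(L-1) \<or> frob dims g k = 0"
    using frob_nonneg[of dims g k] by (metis less_eq_real_def mult_le_cancel_right)
  then show ?thesis unfolding g_def[symmetric] using G_nonneg assms(2) by auto
qed

lemma descent:
  assumes ball: "\<And>k. 1 \<le> k \<Longrightarrow> k \<le> L \<Longrightarrow> frob dims W k \<le> R - 1" and R1: "1 \<le> R"
    and eta0: "0 \<le> \<eta>" and eta1: "\<eta> \<le> 1 / betaR L \<beta> G R"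
  shows "risk loss n x y dims L (addp W \<eta> (\<lambda>k i j. - gradP (risk loss n x y dims L) W k i j))
         \<le> risk loss n x y dims L W - \<eta>/2 * SS dims L (\<lambda>k i j. (gradP (risk loss n x y dims L) W k i j)\<^sup>2)"
proof (cases "\<eta> = 0")
  case True then show ?thesis by simp
next
  case False
  then have eta: "0 < \<eta>" using eta0 by simp
  define g where "g = gradP (risk loss n x y dims L) W"
  define Dn where "Dn = (\<lambda>k i j. - g k i j)"
  define N2 where "N2 = SS dims L (\<lambda>k i j. (g k i j)\<^sup>2)"
  define B where "B = betaR L \<beta> G R"
  define P where "P = R^(L-1)"
  define Q where "Q = R^(2*L-2)"
  define Sg where "Sg = Sd dims g L"
  have N2nn: "0 \<le> N2" unfolding N2_def SS_def by (intro sum_nonneg) auto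
  have P1: "1 \<le> P" unfolding P_def using R1 by simp
  have "2*L-2 = (L-1)+(L-1)" by simp
  then have QP: "Q = P * P" unfolding Q_def P_def by (simp add: power_add)
  have "P * 1 \<le> P * P" using P1 by (intro mult_left_mono) auto
  then have PQ: "P \<le> Q" using QP by simp
  have Qnn: "0 \<le> Q" using PQ P1 by linarith
  have "0 < 1 / B" using eta eta1 unfolding B_def by linarith
  then have Bpos: "0 < B" by simp
  have Bdef: "B = 2 * real L ^ 2 * Q * (\<beta> + G)" unfolding B_def betaR_def Q_def by simp
  have bG: "0 < \<beta> + G"
  proof (rule ccontr)
    assume "\<not> 0 < \<beta> + G"
    then have "2 * real L ^ 2 * Q * (\<beta> + G) \<le> 0" using Qnn by (intro mult_nonneg_nonpos) auto
    then show False using Bpos Bdef by simp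
  qed
  have Lr: "1 \<le> real L" using L by simp
  have etaB: "\<eta> * B \<le> 1" using eta1 Bpos unfolding B_def[symmetric] by (simp add: le_divide_eq)
  have ballR: "frob dims W k \<le> R" if "1 \<le> k" "k \<le> L" for k
  proof -
    have "frob dims W k \<le> R - 1" by (rule ball[OF that])
    then show ?thesis by linarith
  qed
  have L2: "1 \<le> real L ^ 2" using Lr by (simp add: one_le_power)
  have bGQ: "0 \<le> (\<beta> + G) * Q" using bG Qnn by simp
  have f1: "frob dims g k \<le> G * P" if "1 \<le> k" "k \<le> L" for k
    unfolding g_def P_def using ballR R1 that by (rule grad_layer_bound)
  have f2: "\<eta> * (G * P) \<le> 1/2"
  proof -
    have "G * P \<le> real L ^ 2 * Q * (\<beta> + G)"
    proof -
      have "G * P \<le> (\<beta> + G) * Q" using beta_nonneg G_nonneg PQ P1 by (intro mult_mono) auto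
      also have "\<dots> \<le> real L ^ 2 * ((\<beta> + G) * Q)" using Lr bG PQ P1
        using mult_right_mono[OF L2 bGQ] by simp
      finally show ?thesis by (simp add: mult_ac)
    qed
    then have "\<eta> * (G * P) \<le> \<eta> * (B / 2)" using eta Bdef by (intro mult_left_mono) auto
    then show ?thesis using etaB by simp
  qed
  have f3: "frob dims (addp W s Dn) k \<le> R" if "0 \<le> s" "s \<le> \<eta>" "1 \<le> k" "k \<le> L" for s k
  proof -
    have "frob dims (addp W s Dn) k \<le> frob dims W k + \<bar>s\<bar> * frob dims Dn k" by (rule frob_addp)
    also have "\<dots> \<le> (R - 1) + \<eta> * (G * P)"
      using ball[OF that(3,4)] f1[OF that(3,4)] that unfolding Dn_def
      by (intro add_mono mult_mono) (auto simp: G_nonneg)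
    finally show ?thesis using f2 by simp
  qed
  have SdDn: "Sd dims Dn L = Sg" unfolding Sg_def Sd_def Dn_def by simp
  have Sgnn: "0 \<le> Sg" unfolding Sg_def by simp
  have Sg2: "Sg\<^sup>2 \<le> real L * N2" unfolding Sg_def N2_def sum_frob_sq[symmetric] by (rule Sd_cs)
  define p where "p a s = vecW dims (addp W s Dn) (zz y x a) L 0" for a s
  define q where "q a s = dvec dims (addp W s Dn) Dn (zz y x a) L 0" for a s
  define r where "r a s = d2vec dims (addp W s Dn) Dn (zz y x a) L 0" for a s
  have qb: "\<bar>q a s\<bar> \<le> Sg * P" if "0 \<le> s" "s \<le> \<eta>" "a < n" for a s
  proof -
    have "\<bar>q a s\<bar> \<le> nv (dims L) (dvec dims (addp W s Dn) Dn (zz y x a) L)"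
      unfolding q_def using dimL by (intro nv_abs0) auto
    also have "\<dots> \<le> Sd dims Dn L * R^(L-1) * nv (dims 0) (zz y x a)"
      by (rule dvec_bound) (use f3 that R1 in auto)
    also have "\<dots> \<le> Sg * P"
      unfolding P_def SdDn by (rule mult_left_le) (use zn that Sgnn P1 P_def in auto)
    finally show ?thesis .
  qed
  have rb: "\<bar>r a s\<bar> \<le> Sg\<^sup>2 * P" if "0 \<le> s" "s \<le> \<eta>" "a < n" for a s
  proof -
    have "\<bar>r a s\<bar> \<le> nv (dims L) (d2vec dims (addp W s Dn) Dn (zz y x a) L)"
      unfolding r_def using dimL by (intro nv_abs0) auto
    also have "\<dots> \<le> (Sd dims Dn L)\<^sup>2 * R^(L-1) * nv (dims 0) (zz y x a)"
      by (rule d2vec_bound) (use f3 that R1 in auto)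
    also have "\<dots> \<le> Sg\<^sup>2 * P"
      unfolding P_def SdDn by (rule mult_left_le) (use zn that Sgnn P1 P_def in auto)
    finally show ?thesis .
  qed
  have pd: "((p a) has_real_derivative q a s) (at s)" for a s
    unfolding p_def q_def by (rule vecW_deriv)
  have qd: "((q a) has_real_derivative r a s) (at s)" for a s
    unfolding q_def r_def by (rule dvec_deriv)
  have tb: "\<bar>loss' (p a \<xi>) * q a \<xi> - loss' (p a 0) * q a 0\<bar> \<le> \<xi> * (Sg\<^sup>2 * ((\<beta> + G) * Q))"
    if "0 \<le> \<xi>" "\<xi> \<le> \<eta>" "a < n" for a \<xi>
  proof -
    have dp: "\<bar>p a \<xi> - p a 0\<bar> \<le> \<xi> * (Sg * P)"
      by (rule mvt_bound[OF that(1)]) (use pd qb that in auto)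
    have dq: "\<bar>q a \<xi> - q a 0\<bar> \<le> \<xi> * (Sg\<^sup>2 * P)"
      by (rule mvt_bound[OF that(1)]) (use qd rb that in auto)
    have "loss' (p a \<xi>) * q a \<xi> - loss' (p a 0) * q a 0
        = (loss' (p a \<xi>) - loss' (p a 0)) * q a \<xi> + loss' (p a 0) * (q a \<xi> - q a 0)"
      by (simp add: algebra_simps)
    then have "\<bar>loss' (p a \<xi>) * q a \<xi> - loss' (p a 0) * q a 0\<bar>
        \<le> \<bar>loss' (p a \<xi>) - loss' (p a 0)\<bar> * \<bar>q a \<xi>\<bar> + \<bar>loss' (p a 0)\<bar> * \<bar>q a \<xi> - q a 0\<bar>"
      by (simp add: abs_mult[symmetric] abs_triangle_ineq)
    also have "\<dots> \<le> (\<beta> * (\<xi> * (Sg * P))) * (Sg * P) + G * (\<xi> * (Sg\<^sup>2 * P))"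
    proof (intro add_mono mult_mono)
      show "\<bar>loss' (p a \<xi>) - loss' (p a 0)\<bar> \<le> \<beta> * (\<xi> * (Sg * P))"
        using lip dp beta_nonneg by (meson mult_left_mono order_trans)
    qed (use qb dq that bnd G_nonneg beta_nonneg Sgnn P1 in auto)
    also have "\<dots> = \<xi> * (Sg\<^sup>2 * (\<beta> * (P * P) + G * P))" by (simp add: power2_eq_square algebra_simps)
    also have "\<dots> \<le> \<xi> * (Sg\<^sup>2 * ((\<beta> + G) * Q))"
    proof -
      have "\<beta> * (P * P) + G * P \<le> (\<beta> + G) * Q"
        using QP PQ G_nonneg by (simp add: algebra_simps mult_left_mono)
      then show ?thesis using that by (intro mult_left_mono) auto
    qed
    finally show ?thesis .
  qed
  define phi' where "phi' s = dd loss' n x y dims L (addp W s Dn) Dn" for s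
  have phid: "((\<lambda>s. risk loss n x y dims L (addp W s Dn)) has_real_derivative phi' s) (at s)" for s
    unfolding phi'_def by (rule rd)
  have phi0: "phi' 0 = - N2"
    unfolding phi'_def addp0 ddl N2_def SS_def Dn_def g_def by (simp add: power2_eq_square sum_negf)
  have phidiff: "phi' \<xi> \<le> - N2 + \<xi> * (real L * N2 * ((\<beta> + G) * Q))" if "0 \<le> \<xi>" "\<xi> \<le> \<eta>" for \<xi>
  proof -
    have "\<bar>phi' \<xi> - phi' 0\<bar> \<le> \<xi> * (Sg\<^sup>2 * ((\<beta> + G) * Q))"
    proof (cases "n = 0")
      case True then show ?thesis using that Qnn bG by (simp add: phi'_def dd_def)
    next
      case False
      have "phi' \<xi> - phi' 0 = (1 / real n) * (\<Sum>a<n. loss' (p a \<xi>) * q a \<xi> - loss' (p a 0) * q a 0)"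
        unfolding phi'_def dd_def p_def q_def by (simp add: sum_subtractf right_diff_distrib)
      then have "\<bar>phi' \<xi> - phi' 0\<bar> \<le> (1 / real n) * (\<Sum>a<n. \<bar>loss' (p a \<xi>) * q a \<xi> - loss' (p a 0) * q a 0\<bar>)"
        by (simp add: abs_mult sum_abs divide_right_mono del: abs_mult)
      also have "\<dots> \<le> (1 / real n) * (\<Sum>a<n. \<xi> * (Sg\<^sup>2 * ((\<beta> + G) * Q)))"
        using tb that by (intro mult_left_mono sum_mono) auto
      also have "\<dots> = \<xi> * (Sg\<^sup>2 * ((\<beta> + G) * Q))" using False by simp
      finally show ?thesis .
    qed
    also have "\<dots> \<le> \<xi> * (real L * N2 * ((\<beta> + G) * Q))"
      using that Sg2 bG PQ P1 by (intro mult_left_mono mult_right_mono) auto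
    finally show ?thesis using phi0 by linarith
  qed
  have cst: "\<eta> * (real L * ((\<beta> + G) * Q)) \<le> 1/2"
  proof -
    have "real L * 1 \<le> real L * real L" using Lr by (intro mult_left_mono) auto
    then have LL: "real L \<le> real L ^ 2" by (simp add: power2_eq_square)
    have "real L * ((\<beta> + G) * Q) \<le> real L ^ 2 * ((\<beta> + G) * Q)"
      by (rule mult_right_mono[OF LL bGQ])
    then have "real L * ((\<beta> + G) * Q) \<le> B / 2" unfolding Bdef by (simp add: mult_ac)
    then have "\<eta> * (real L * ((\<beta> + G) * Q)) \<le> \<eta> * (B / 2)" using eta by (intro mult_left_mono) auto
    then show ?thesis using etaB by simp
  qed
  obtain \<xi> where xi: "0 < \<xi>" "\<xi> < \<eta>"
    "risk loss n x y dims L (addp W \<eta> Dn) - risk loss n x y dims L (addp W 0 Dn) = (\<eta> - 0) * phi' \<xi>"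
    using MVT2[OF eta, of "\<lambda>s. risk loss n x y dims L (addp W s Dn)" phi'] phid by blast
  have "phi' \<xi> \<le> - N2 + \<eta> * (real L * N2 * ((\<beta> + G) * Q))"
  proof -
    have X: "0 \<le> real L * N2 * ((\<beta> + G) * Q)" using N2nn bGQ by simp
    have "\<xi> * (real L * N2 * ((\<beta> + G) * Q)) \<le> \<eta> * (real L * N2 * ((\<beta> + G) * Q))"
      using xi X by (intro mult_right_mono) auto
    then show ?thesis using phidiff[of \<xi>] xi by linarith
  qed
  also have "\<dots> \<le> - N2 + N2 / 2"
  proof -
    have "N2 * (\<eta> * (real L * ((\<beta> + G) * Q))) \<le> N2 * (1/2)"
      using cst N2nn by (intro mult_left_mono) auto
    moreover have "\<eta> * (real L * N2 * ((\<beta> + G) * Q)) = N2 * (\<eta> * (real L * ((\<beta> + G) * Q)))"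
      by (simp add: mult_ac)
    ultimately show ?thesis by linarith
  qed
  finally have "phi' \<xi> \<le> - N2 / 2" by simp
  then have "\<eta> * phi' \<xi> \<le> \<eta> * (- N2 / 2)" using eta by (intro mult_left_mono) auto
  then show ?thesis using xi unfolding Dn_def g_def N2_def by simp
qed

end


fun vf :: "(nat \<Rightarrow> nat) \<Rightarrow> params \<Rightarrow> (nat \<Rightarrow> real) \<Rightarrow> nat \<Rightarrow> nat \<Rightarrow> real" where
  "vf dims W v 0 = v"
| "vf dims W v (Suc k) = (\<lambda>i. \<Sum>m<dims (Suc k). W (Suc (Suc k)) i m * vf dims W v k m)"

lemma vec_vf: "vecW dims W z (Suc k) = vf dims W (vecW dims W z 1) k"
  by (induction k) simp_all

lemma dvec_vf: "(\<And>k i j. 2 \<le> k \<Longrightarrow> D k i j = 0) \<Longrightarrow> dvec dims W D z (Suc k) = vf dims W (dvec dims W D z 1) k"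
proof (induction k)
  case 0 then show ?case by simp
next
  case (Suc k)
  have "dvec dims W D z (Suc (Suc k)) = (\<lambda>i. \<Sum>m<dims (Suc k). W (Suc (Suc k)) i m * dvec dims W D z (Suc k) m)"
    using Suc.prems by (simp del: dvec.simps(2) add: dvec.simps(2)[of dims W D z "Suc k"])
  then show ?case using Suc by simp
qed

definition ev :: "nat \<Rightarrow> nat \<Rightarrow> real" where "ev m = (\<lambda>i. if i = m then 1 else 0)"

lemma vf_lin: "i < dims (Suc k) \<Longrightarrow> vf dims W v k i = (\<Sum>m<dims 1. v m * vf dims W (ev m) k i)"
proof (induction k arbitrary: i)
  case 0
  have "(\<Sum>m<dims 1. v m * ev m i) = (\<Sum>m<dims 1. if m = i then v i else 0)"
    by (intro sum.cong refl) (auto simp: ev_def)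
  then show ?case using 0 by simp
next
  case (Suc k)
  have "vf dims W v (Suc k) i = (\<Sum>m'<dims (Suc k). W (Suc (Suc k)) i m' * (\<Sum>m<dims 1. v m * vf dims W (ev m) k m'))"
    using Suc.IH by simp
  also have "\<dots> = (\<Sum>m<dims 1. v m * vf dims W (ev m) (Suc k) i)"
    by (simp add: sum_distrib_left sum_distrib_right mult_ac) (rule sum.swap)
  finally show ?case .
qed

context net begin

lemma grad_lower:
  fixes V :: params and u :: "nat \<Rightarrow> real" and r \<delta> m \<gamma> :: real
  assumes r1: "1 \<le> r" and Vb: "\<And>k. 1 \<le> k \<Longrightarrow> k \<le> L \<Longrightarrow> frob dims V k \<le> r"
    and npos: "0 < n" and mpos: "0 < m" and gpos: "0 < \<gamma>" and dpos: "0 < \<delta>"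
    and sep: "\<And>a. a < n \<Longrightarrow> \<gamma> \<le> (\<Sum>j<dims 0. u j * zz y x a j)"
    and hp: "\<exists>a<n. \<delta> \<le> vecW dims V (zz y x a) L 0"
    and hm: "\<And>a. a < n \<Longrightarrow> loss' (vecW dims V (zz y x a) L 0) \<le> - m"
    and Upos: "0 < (\<Sum>j<dims 0. (u j)\<^sup>2)"
  shows "(m * \<gamma>)\<^sup>2 * (\<delta> / r)\<^sup>2 / (\<Sum>j<dims 0. (u j)\<^sup>2)
         \<le> SS dims L (\<lambda>k i j. (gradP (risk loss n x y dims L) V k i j)\<^sup>2)"
proof -
  define g where "g = gradP (risk loss n x y dims L) V"
  define U where "U = (\<Sum>j<dims 0. (u j)\<^sup>2)"
  define c where "c i = vf dims V (ev i) (L-1) 0" for i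
  define C where "C = (\<Sum>i<dims 1. (c i)\<^sup>2)"
  define D :: params where "D = (\<lambda>k i j. if k = 1 then c i * u j else 0)"
  define N2 where "N2 = SS dims L (\<lambda>k i j. (g k i j)\<^sup>2)"
  have LS: "L = Suc (L-1)" using L by simp
  have d0: "0 < dims (Suc (L-1))" using dimL LS by simp
  have Cnn: "0 \<le> C" unfolding C_def by (intro sum_nonneg) auto
  have plin: "vecW dims V z L 0 = (\<Sum>i<dims 1. vecW dims V z 1 i * c i)" for z
  proof -
    have "vecW dims V z L 0 = vf dims V (vecW dims V z 1) (L-1) 0"
      using vec_vf[of dims V z "L-1"] LS by simp
    also have "\<dots> = (\<Sum>i<dims 1. vecW dims V z 1 i * c i)"
      unfolding c_def by (rule vf_lin[where dims=dims and k="L-1", OF d0])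
    finally show ?thesis .
  qed
  have dlin: "dvec dims V D z L 0 = (\<Sum>j<dims 0. u j * z j) * C" for z
  proof -
    have "dvec dims V D z L 0 = vf dims V (dvec dims V D z 1) (L-1) 0"
      using dvec_vf[of D dims V z "L-1"] LS by (simp add: D_def)
    also have "\<dots> = (\<Sum>i<dims 1. dvec dims V D z 1 i * c i)"
      unfolding c_def by (rule vf_lin[where dims=dims and k="L-1", OF d0])
    also have "\<dots> = (\<Sum>i<dims 1. ((\<Sum>j<dims 0. u j * z j) * c i) * c i)"
      by (intro sum.cong refl) (simp add: D_def sum_distrib_left mult_ac)
    also have "\<dots> = (\<Sum>j<dims 0. u j * z j) * C"
      unfolding C_def by (simp add: sum_distrib_left power2_eq_square mult_ac)
    finally show ?thesis .
  qed
  have ddD: "dd loss' n x y dims L V D \<le> - (m * \<gamma>) * C"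
  proof -
    have t: "loss' (vecW dims V (zz y x a) L 0) * dvec dims V D (zz y x a) L 0 \<le> - (m * \<gamma>) * C" if "a < n" for a
    proof -
      have "loss' (vecW dims V (zz y x a) L 0) * (\<Sum>j<dims 0. u j * zz y x a j) \<le> (- m) * \<gamma>"
      proof -
        have "loss' (vecW dims V (zz y x a) L 0) * (\<Sum>j<dims 0. u j * zz y x a j) \<le> (- m) * (\<Sum>j<dims 0. u j * zz y x a j)"
          using hm[OF that] sep[OF that] gpos by (intro mult_right_mono) auto
        also have "\<dots> \<le> (- m) * \<gamma>" using sep[OF that] mpos by simp
        finally show ?thesis .
      qed
      then have "loss' (vecW dims V (zz y x a) L 0) * (\<Sum>j<dims 0. u j * zz y x a j) * C \<le> (- m) * \<gamma> * C"
        using Cnn by (intro mult_right_mono) auto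
      then show ?thesis unfolding dlin by (simp add: mult_ac)
    qed
    have "dd loss' n x y dims L V D \<le> (1 / real n) * (\<Sum>a<n. - (m * \<gamma>) * C)"
      unfolding dd_def using t npos by (intro mult_left_mono sum_mono) auto
    also have "\<dots> = - (m * \<gamma>) * C" using npos by simp
    finally show ?thesis .
  qed
  have SDD: "SS dims L (\<lambda>k i j. (D k i j)\<^sup>2) = C * U"
  proof -
    have "SS dims L (\<lambda>k i j. (D k i j)\<^sup>2) = (\<Sum>k\<in>{1..L}. if k = 1 then (\<Sum>i<dims 1. \<Sum>j<dims 0. (c i * u j)\<^sup>2) else 0)"
      unfolding SS_def D_def by (intro sum.cong refl) auto
    also have "\<dots> = (\<Sum>i<dims 1. \<Sum>j<dims 0. (c i * u j)\<^sup>2)" using L by simp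
    also have "\<dots> = C * U" unfolding C_def U_def
      by (simp add: power_mult_distrib sum_product)
    finally show ?thesis .
  qed
  define lam where "lam = m * \<gamma> / U"
  have lpos: "0 < lam" unfolding lam_def U_def using mpos gpos Upos by simp
  have amgm: "- 2 * SS dims L (\<lambda>k i j. D k i j * g k i j) \<le> lam * SS dims L (\<lambda>k i j. (D k i j)\<^sup>2) + N2 / lam"
  proof -
    have pt: "- 2 * (a * b) \<le> lam * a\<^sup>2 + b\<^sup>2 / lam" for a b :: real
    proof -
      have "0 \<le> (lam * a + b)\<^sup>2 / lam" using lpos by simp
      also have "(lam * a + b)\<^sup>2 / lam = lam * a\<^sup>2 + 2 * (a * b) + b\<^sup>2 / lam"
        using lpos by (simp add: power2_eq_square field_simps)
      finally show ?thesis by simp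
    qed
    have "- 2 * SS dims L (\<lambda>k i j. D k i j * g k i j) = SS dims L (\<lambda>k i j. - 2 * (D k i j * g k i j))"
      unfolding SS_def by (simp add: sum_distrib_left)
    also have "\<dots> \<le> SS dims L (\<lambda>k i j. lam * (D k i j)\<^sup>2 + (g k i j)\<^sup>2 / lam)"
      unfolding SS_def by (intro sum_mono pt)
    also have "\<dots> = lam * SS dims L (\<lambda>k i j. (D k i j)\<^sup>2) + N2 / lam"
      unfolding SS_def N2_def by (simp add: sum.distrib sum_distrib_left sum_divide_distrib)
    finally show ?thesis .
  qed
  have key: "2 * (m * \<gamma>) * C \<le> lam * (C * U) + N2 / lam"
    using amgm ddD SDD ddl[of V D] unfolding g_def by simp
  have "lam * (C * U) = (m * \<gamma>) * C" unfolding lam_def using Upos U_def by simp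
  then have NC: "(m * \<gamma>) * C \<le> N2 / lam" using key by linarith
  obtain a where a: "a < n" "\<delta> \<le> vecW dims V (zz y x a) L 0" using hp by blast
  have nv1: "nv (dims 1) (vecW dims V (zz y x a) 1) \<le> r"
  proof -
    have "nv (dims 1) (vecW dims V (zz y x a) 1) \<le> r^1 * nv (dims 0) (zz y x a)"
      by (rule vec_bound) (use Vb L in auto)
    also have "\<dots> \<le> r" using zn a(1) r1 by (simp add: mult_left_le)
    finally show ?thesis .
  qed
  have "\<delta>\<^sup>2 \<le> (vecW dims V (zz y x a) L 0)\<^sup>2" using a dpos by (intro power_mono) auto
  also have "\<dots> \<le> (\<Sum>i<dims 1. (vecW dims V (zz y x a) 1 i)\<^sup>2) * C"
    unfolding plin C_def by (rule Cauchy_Schwarz_ineq_sum)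
  also have "\<dots> = (nv (dims 1) (vecW dims V (zz y x a) 1))\<^sup>2 * C" by (simp add: nv_sq)
  also have "\<dots> \<le> r\<^sup>2 * C" using nv1 Cnn by (intro mult_right_mono power_mono) auto
  finally have dC: "(\<delta> / r)\<^sup>2 \<le> C" using r1 by (simp add: power_divide divide_le_eq mult.commute)
  have "(m * \<gamma>)\<^sup>2 * (\<delta> / r)\<^sup>2 / U \<le> (m * \<gamma>)\<^sup>2 * C / U"
    using dC Upos U_def by (intro divide_right_mono mult_left_mono) auto
  also have "\<dots> = lam * ((m * \<gamma>) * C)" unfolding lam_def by (simp add: power2_eq_square)
  also have "\<dots> \<le> lam * (N2 / lam)" using NC lpos by (intro mult_left_mono) auto
  also have "\<dots> = N2" using lpos by simp
  finally show ?thesis unfolding U_def N2_def g_def .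
qed

end


theorem mainTheorem10:
  fixes n L :: nat and dims :: "nat \<Rightarrow> nat"
    and x :: "nat \<Rightarrow> nat \<Rightarrow> real" and y :: "nat \<Rightarrow> real"
    and loss loss' :: "real \<Rightarrow> real" and \<beta> G :: real
    and W :: "nat \<Rightarrow> params" and \<eta> Rad :: "nat \<Rightarrow> real"
  assumes L: "L \<ge> 1"
    and dims_pos: "\<forall>k\<le>L. dims k \<ge> 1" and dimL: "dims L = 1"
    and xnorm: "\<forall>i<n. sqrt (\<Sum>j<dims 0. (x i j)\<^sup>2) \<le> 1"
    and ylab: "\<forall>i<n. y i \<in> {-1, 1}"
    and separable: "\<exists>u. \<forall>i<n. (\<Sum>j<dims 0. u j * (y i * x i j)) > 0"
    \<comment> \<open>Assumption 1\<close>
    and loss_deriv: "\<forall>s. (loss has_real_derivative loss' s) (at s)"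
    and loss'_cont: "continuous_on UNIV loss'"
    and loss'_neg: "\<forall>s. loss' s < 0"
    and loss_bot: "filterlim loss at_top at_bot"
    and loss_top: "(loss \<longlongrightarrow> 0) at_top"
    \<comment> \<open>gradient descent\<close>
    and GD: "\<forall>t k i j. W (Suc t) k i j
              = W t k i j - \<eta> t * gradP (risk loss n x y dims L) (W t) k i j"
    \<comment> \<open>Assumption 2\<close>
    and init_grad: "\<exists>k\<in>{1..L}. \<exists>i<dims k. \<exists>j<dims (k - 1).
                      gradP (risk loss n x y dims L) (W 0) k i j \<noteq> 0"
    and init_risk: "risk loss n x y dims L (W 0) \<le> loss 0"
    \<comment> \<open>Assumption 4\<close>
    and lip: "\<forall>a b. \<bar>loss' a - loss' b\<bar> \<le> \<beta> * \<bar>a - b\<bar>"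
    and bnd: "\<forall>a. \<bar>loss' a\<bar> \<le> G"
    \<comment> \<open>Assumption 5\<close>
    and step: "\<forall>t. \<eta> t = min (1 / betaR L \<beta> G (Rad t)) 1"
    and radii: "\<forall>t. inBall dims L (W t) (Rad t - 1)"
    and radii_keep: "\<forall>t. inBall dims L (W (Suc t)) (Rad t - 1) \<longrightarrow> Rad (Suc t) = Rad t"
  shows "\<not> bdd_above (range (\<lambda>t. maxfrob dims L (W t)))
     \<and> filterlim (\<lambda>N. \<Sum>t<N. \<eta> t) at_top sequentially
     \<and> (\<forall>r>0. summable (\<lambda>t. if inBall dims L (W t) r then \<eta> t else 0))"
proof -
  have zn: "\<forall>a<n. nv (dims 0) (zz y x a) \<le> 1"
  proof (intro allI impI)
    fix a assume a: "a < n"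
    have y2: "(y a)\<^sup>2 = 1" using ylab a by auto
    have "nv (dims 0) (zz y x a) = sqrt (\<Sum>j<dims 0. (x a j)\<^sup>2)"
      unfolding nv_def L2_set_def zz_def by (simp add: power_mult_distrib y2)
    then show "nv (dims 0) (zz y x a) \<le> 1" using xnorm a by simp
  qed
  interpret net n L dims x y loss loss' \<beta> G
    using L dimL zn loss_deriv lip bnd by unfold_locales
  define g where "g t = gradP (risk loss n x y dims L) (W t)" for t
  define N2 where "N2 t = SS dims L (\<lambda>k i j. (g t k i j)\<^sup>2)" for t
  define Rk where "Rk t = risk loss n x y dims L (W t)" for t
  have N2nn: "0 \<le> N2 t" for t unfolding N2_def SS_def by (intro sum_nonneg) auto
  have Wstep: "W (Suc t) = addp (W t) (\<eta> t) (\<lambda>k i j. - g t k i j)" for t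
    using GD unfolding addp_def g_def by (auto simp: fun_eq_iff)
  have ball: "frob dims (W t) k \<le> Rad t - 1" if "1 \<le> k" "k \<le> L" for t k
    using radii that unfolding inBall_def by auto
  have Rad1: "1 \<le> Rad t" for t
    using ball[of 1 t] frob_nonneg[of dims "W t" 1] L by linarith
  have G0: "0 < G" using bnd loss'_neg by (smt (verit))
  have bG: "0 < \<beta> + G" using beta_nonneg G0 by simp
  have bRpos: "0 < betaR L \<beta> G R" if "1 \<le> R" for R
    unfolding betaR_def using that bG L by simp
  have eta_pos: "0 < \<eta> t" for t using step bRpos[OF Rad1[of t]] by simp
  have eta_le: "\<eta> t \<le> 1 / betaR L \<beta> G (Rad t)" for t using step by simp
  have desc: "Rk (Suc t) \<le> Rk t - \<eta> t / 2 * N2 t" for t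
    unfolding Rk_def Wstep N2_def g_def
    by (rule descent) (use ball Rad1 eta_le less_imp_le[OF eta_pos[of t]] in auto)
  have dec: "loss b < loss a" if "a < b" for a b
    using DERIV_neg_imp_decreasing[OF that, of loss] loss_deriv loss'_neg by blast
  have loss_nn: "0 \<le> loss s" for s
  proof (rule ccontr)
    assume "\<not> 0 \<le> loss s"
    then have neg: "loss s < 0" by simp
    have "\<forall>\<^sub>F t in at_top. loss s / 2 < loss t"
      using order_tendstoD(1)[OF loss_top, of "loss s / 2"] neg by linarith
    then obtain N where N: "\<And>t. N \<le> t \<Longrightarrow> loss s / 2 < loss t"
      unfolding eventually_at_top_linorder by blast
    have "loss (max N s + 1) < loss s" using dec[of s "max N s + 1"] by simp
    moreover have "loss s / 2 < loss (max N s + 1)" using N[of "max N s + 1"] by simp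
    ultimately show False using neg by simp
  qed
  have Rk_nn: "0 \<le> Rk t" for t
    unfolding Rk_def risk_vec[of dims L, OF dimL] using loss_nn by (simp add: sum_nonneg)
  have Rk_mono: "Rk (Suc t) \<le> Rk t" for t
  proof -
    have "0 \<le> \<eta> t / 2 * N2 t" using eta_pos[of t] N2nn[of t] by simp
    then show ?thesis using desc[of t] by linarith
  qed
  have sumN: "summable (\<lambda>t. \<eta> t * N2 t)"
  proof (rule summableI_nonneg_bounded)
    show "0 \<le> \<eta> t * N2 t" for t using eta_pos N2nn by (simp add: less_imp_le)
    have "(\<Sum>t<T. \<eta> t * N2 t) \<le> 2 * (Rk 0 - Rk T)" for T
    proof (induction T)
      case 0 then show ?case by simp
    next
      case (Suc T) then show ?case using desc[of T] by simp
    qed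
    then show "(\<Sum>t<T. \<eta> t * N2 t) \<le> 2 * Rk 0" for T using Rk_nn[of T] by (smt (verit) mult_nonneg_nonneg)
  qed
  have n_pos: "0 < n"
  proof (rule ccontr)
    assume "\<not> 0 < n"
    then have n0: "n = 0" by simp
    have "gradP (risk loss n x y dims L) (W 0) k i j = 0" for k i j
      unfolding gradP_def risk_def n0 by simp
    then show False using init_grad by auto
  qed
  have N2_0: "0 < N2 0"
  proof -
    obtain k i j where kij: "k \<in> {1..L}" "i < dims k" "j < dims (k-1)" "g 0 k i j \<noteq> 0"
      using init_grad unfolding g_def by blast
    have "0 < (g 0 k i j)\<^sup>2" using kij by simp
    also have "\<dots> \<le> (\<Sum>j<dims (k-1). (g 0 k i j)\<^sup>2)"
      by (rule member_le_sum) (use kij in auto)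
    also have "\<dots> \<le> (\<Sum>i<dims k. \<Sum>j<dims (k-1). (g 0 k i j)\<^sup>2)"
      by (rule member_le_sum[where f = "\<lambda>i. \<Sum>j<dims (k-1). (g 0 k i j)\<^sup>2"]) (use kij in \<open>auto intro: sum_nonneg\<close>)
    also have "\<dots> \<le> N2 0" unfolding N2_def SS_def
      by (rule member_le_sum[where f = "\<lambda>k. \<Sum>i<dims k. \<Sum>j<dims (k-1). (g 0 k i j)\<^sup>2"]) (use kij in \<open>auto intro!: sum_nonneg\<close>)
    finally show ?thesis .
  qed
  have R1lt: "Rk 1 < loss 0"
  proof -
    have "0 < \<eta> 0 / 2 * N2 0" using eta_pos[of 0] N2_0 by simp
    then show ?thesis using desc[of 0] init_risk unfolding Rk_def by simp
  qed
  have Rk_le1: "Rk t \<le> Rk 1" if "1 \<le> t" for t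
    using that
  proof (induction t rule: dec_induct)
    case base then show ?case by simp
  next
    case (step t) then show ?case using Rk_mono[of t] by simp
  qed
  have part3: "\<forall>r>0. summable (\<lambda>t. if inBall dims L (W t) r then \<eta> t else 0)"
  proof (intro allI impI)
    fix r :: real assume "0 < r"
    define r1 where "r1 = max r 1"
    have r1: "1 \<le> r1" "r \<le> r1" unfolding r1_def by auto
    obtain \<delta> where \<delta>: "0 < \<delta>" "Rk 1 < loss \<delta>"
    proof -
      have "isCont loss 0" using loss_deriv DERIV_isCont by blast
      then have "(loss \<longlongrightarrow> loss 0) (at 0)" by (simp add: isCont_def)
      then have "\<forall>\<^sub>F s in at 0. Rk 1 < loss s" using order_tendstoD(1) R1lt by blast
      then obtain d where d: "0 < d" "\<And>s. s \<noteq> 0 \<Longrightarrow> dist s 0 < d \<Longrightarrow> Rk 1 < loss s"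
        unfolding eventually_at by blast
      show ?thesis by (rule that[of "d/2"]) (use d in auto)
    qed
    obtain m where m: "0 < m" "\<And>s. - (r1^L) \<le> s \<Longrightarrow> s \<le> r1^L \<Longrightarrow> loss' s \<le> - m"
    proof -
      have "continuous_on {- (r1^L)..r1^L} (\<lambda>s. - loss' s)"
        using loss'_cont by (intro continuous_intros) (auto intro: continuous_on_subset)
      then obtain s0 where s0: "s0 \<in> {- (r1^L)..r1^L}" "\<And>s. s \<in> {- (r1^L)..r1^L} \<Longrightarrow> - loss' s0 \<le> - loss' s"
        using continuous_attains_inf[of "{- (r1^L)..r1^L}" "\<lambda>s. - loss' s"] r1 by force
      show ?thesis by (rule that[of "- loss' s0"]) (use s0 loss'_neg in auto)
    qed
    obtain u where u: "\<And>a. a < n \<Longrightarrow> 0 < (\<Sum>j<dims 0. u j * zz y x a j)"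
      using separable unfolding zz_def by blast
    define \<gamma> where "\<gamma> = Min ((\<lambda>a. \<Sum>j<dims 0. u j * zz y x a j) ` {..<n})"
    have gpos: "0 < \<gamma>" unfolding \<gamma>_def using n_pos u by (subst Min_gr_iff) auto
    have sep: "\<gamma> \<le> (\<Sum>j<dims 0. u j * zz y x a j)" if "a < n" for a
      unfolding \<gamma>_def using that by (intro Min_le) auto
    define U where "U = (\<Sum>j<dims 0. (u j)\<^sup>2)"
    have Upos: "0 < U"
    proof (rule ccontr)
      assume "\<not> 0 < U"
      then have "U = 0" unfolding U_def using sum_nonneg[of "{..<dims 0}" "\<lambda>j. (u j)\<^sup>2"] by simp
      then have "\<forall>j\<in>{..<dims 0}. (u j)\<^sup>2 = 0" unfolding U_def by (subst sum_nonneg_eq_0_iff[symmetric]) auto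
      then have "(\<Sum>j<dims 0. u j * zz y x 0 j) = 0" by simp
      then show False using u[OF n_pos] by simp
    qed
    define cst where "cst = (m * \<gamma>)\<^sup>2 * (\<delta> / r1)\<^sup>2 / U"
    have cpos: "0 < cst" unfolding cst_def using m gpos \<delta> r1 Upos by simp
    have lb: "cst \<le> N2 t" if t1: "1 \<le> t" and tb: "inBall dims L (W t) r" for t
    proof -
      have Vb: "frob dims (W t) k \<le> r1" if "1 \<le> k" "k \<le> L" for k
        using tb that r1 unfolding inBall_def by force
      have pb: "\<bar>vecW dims (W t) (zz y x a) L 0\<bar> \<le> r1^L" if "a < n" for a
      proof -
        have "\<bar>vecW dims (W t) (zz y x a) L 0\<bar> \<le> nv (dims L) (vecW dims (W t) (zz y x a) L)"
          using dimL by (intro nv_abs0) auto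
        also have "\<dots> \<le> r1^L * nv (dims 0) (zz y x a)" by (rule vec_bound) (use Vb in auto)
        also have "\<dots> \<le> r1^L" using zn that r1 by (intro mult_left_le) auto
        finally show ?thesis .
      qed
      have hp: "\<exists>a<n. \<delta> \<le> vecW dims (W t) (zz y x a) L 0"
      proof (rule ccontr)
        assume "\<not> ?thesis"
        then have lt: "\<And>a. a < n \<Longrightarrow> Rk 1 < loss (vecW dims (W t) (zz y x a) L 0)"
          using dec \<delta>(2) by (meson not_le order.strict_trans)
        have "(\<Sum>a<n. Rk 1) < (\<Sum>a<n. loss (vecW dims (W t) (zz y x a) L 0))"
          using n_pos lt by (intro sum_strict_mono) auto
        then have "Rk 1 < Rk t" unfolding Rk_def risk_vec[of dims L, OF dimL] using n_pos
          by (simp add: divide_simps mult.commute)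
        then show False using Rk_le1[OF t1] by simp
      qed
      have "cst \<le> SS dims L (\<lambda>k i j. (gradP (risk loss n x y dims L) (W t) k i j)\<^sup>2)"
        unfolding cst_def U_def
      proof (rule grad_lower[OF r1(1) Vb n_pos m(1) gpos \<delta>(1) sep hp])
        show "\<And>a. a < n \<Longrightarrow> loss' (vecW dims (W t) (zz y x a) L 0) \<le> - m"
          using pb m(2) by (meson abs_le_D1 abs_le_D2 minus_le_iff)
      qed (use Upos U_def in auto)
      then show ?thesis unfolding N2_def g_def .
    qed
    show "summable (\<lambda>t. if inBall dims L (W t) r then \<eta> t else 0)"
    proof (rule summable_comparison_test)
      show "summable (\<lambda>t. \<eta> t * N2 t / cst)" using sumN by (rule summable_divide)
      show "\<exists>N. \<forall>t\<ge>N. norm (if inBall dims L (W t) r then \<eta> t else 0) \<le> \<eta> t * N2 t / cst"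
      proof (intro exI allI impI)
        fix t :: nat assume "1 \<le> t"
        show "norm (if inBall dims L (W t) r then \<eta> t else 0) \<le> \<eta> t * N2 t / cst"
        proof (cases "inBall dims L (W t) r")
          case True
          have "\<eta> t * cst \<le> \<eta> t * N2 t" using lb[OF \<open>1 \<le> t\<close> True] eta_pos[of t] by simp
          then show ?thesis using True eta_pos[of t] cpos by (simp add: le_divide_eq)
        next
          case False then show ?thesis using eta_pos[of t] N2nn[of t] cpos by simp
        qed
      qed
    qed
  qed
  have fmax: "frob dims V k \<le> maxfrob dims L V" if "1 \<le> k" "k \<le> L" for V k
    unfolding maxfrob_def using that by (intro Max_ge) auto
  have part1: "\<not> bdd_above (range (\<lambda>t. maxfrob dims L (W t)))"
  proof
    assume "bdd_above (range (\<lambda>t. maxfrob dims L (W t)))"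
    then obtain M where M: "\<And>t. maxfrob dims L (W t) \<le> M" by (auto simp: bdd_above_def)
    have fM: "frob dims (W t) k \<le> M" if "1 \<le> k" "k \<le> L" for t k
      using fmax[OF that, of "W t"] M[of t] by simp
    have M0: "0 \<le> M" using fM[of 1 0] frob_nonneg[of dims "W 0" 1] L by linarith
    have inb: "inBall dims L (W t) (max M 1)" for t
      unfolding inBall_def using fM by (simp add: le_max_iff_disj)
    obtain Bd where Bd: "\<And>t. Rad t \<le> Bd"
    proof (cases "\<exists>t0. M + 1 \<le> Rad t0")
      case True
      then obtain t0 where t0: "M + 1 \<le> Rad t0" by blast
      have const: "Rad (t0 + d) = Rad t0" for d
      proof (induction d)
        case 0 then show ?case by simp
      next
        case (Suc d)
        have "inBall dims L (W (Suc (t0 + d))) (Rad (t0 + d) - 1)"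
          unfolding inBall_def
        proof
          fix k assume "k \<in> {1..L}"
          then have "frob dims (W (Suc (t0 + d))) k \<le> M" using fM by auto
          then show "frob dims (W (Suc (t0 + d))) k \<le> Rad (t0 + d) - 1" using Suc.IH t0 by linarith
        qed
        then have "Rad (Suc (t0 + d)) = Rad (t0 + d)" using radii_keep by blast
        then show ?case using Suc.IH by simp
      qed
      define Bd where "Bd = max (Rad t0) (Max (Rad ` {..t0}))"
      have "Rad t \<le> Bd" for t
      proof (cases "t0 \<le> t")
        case True
        then obtain d where "t = t0 + d" using le_Suc_ex by blast
        then have "Rad t = Rad t0" using const by simp
        then show ?thesis unfolding Bd_def by simp
      next
        case False
        then have "t \<in> {..t0}" by simp
        then have "Rad t \<le> Max (Rad ` {..t0})" by (intro Max_ge) simp_all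
        then show ?thesis unfolding Bd_def by simp
      qed
      then show ?thesis by (rule that)
    next
      case False
      then have "Rad t \<le> M + 1" for t by (simp add: not_le less_imp_le)
      then show ?thesis by (rule that)
    qed
    define emin where "emin = min (1 / betaR L \<beta> G (max Bd 1)) 1"
    have Bd1: "1 \<le> max Bd 1" by simp
    have epos: "0 < emin" unfolding emin_def using bRpos[OF Bd1] by simp
    have ege: "emin \<le> \<eta> t" for t
    proof -
      have "betaR L \<beta> G (Rad t) \<le> betaR L \<beta> G (max Bd 1)"
      proof -
        have "Rad t ^ (2 * L - 2) \<le> (max Bd 1) ^ (2 * L - 2)"
          using Rad1[of t] Bd[of t] by (intro power_mono) auto
        then have "2 * real L ^ 2 * Rad t ^ (2 * L - 2) \<le> 2 * real L ^ 2 * (max Bd 1) ^ (2 * L - 2)"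
          by (intro mult_left_mono) auto
        then show ?thesis unfolding betaR_def using bG by (intro mult_right_mono) auto
      qed
      then have "1 / betaR L \<beta> G (max Bd 1) \<le> 1 / betaR L \<beta> G (Rad t)"
        using bRpos[OF Rad1[of t]] by (intro divide_left_mono) auto
      then show ?thesis unfolding emin_def using step by auto
    qed
    have "(\<lambda>t. if inBall dims L (W t) (max M 1) then \<eta> t else 0) = \<eta>"
      using inb by (simp add: fun_eq_iff)
    then have "summable \<eta>"
      using part3[rule_format, of "max M 1"] by simp
    then have "\<eta> \<longlonglongrightarrow> 0" by (rule summable_LIMSEQ_zero)
    then have "\<forall>\<^sub>F t in sequentially. \<eta> t < emin" using epos by (rule order_tendstoD(2))
    then obtain t where "\<eta> t < emin" by (auto simp: eventually_sequentially)
    then show False using ege[of t] by simp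
  qed
  have notsum: "\<not> summable \<eta>"
  proof
    assume se: "summable \<eta>"
    have sq: "summable (\<lambda>t. \<eta> t * sqrt (N2 t))"
    proof (rule summable_comparison_test)
      show "summable (\<lambda>t. (\<eta> t + \<eta> t * N2 t) / 2)"
        using se sumN by (intro summable_divide summable_add)
      show "\<exists>N. \<forall>t\<ge>N. norm (\<eta> t * sqrt (N2 t)) \<le> (\<eta> t + \<eta> t * N2 t) / 2"
      proof (intro exI allI impI)
        fix t :: nat
        have "0 \<le> (sqrt (N2 t) - 1)\<^sup>2" by simp
        then have "2 * sqrt (N2 t) \<le> 1 + N2 t" using N2nn[of t] by (simp add: power2_eq_square algebra_simps)
        then have "\<eta> t * (2 * sqrt (N2 t)) \<le> \<eta> t * (1 + N2 t)" using eta_pos[of t] by (intro mult_left_mono) auto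
        then show "norm (\<eta> t * sqrt (N2 t)) \<le> (\<eta> t + \<eta> t * N2 t) / 2"
          using eta_pos[of t] N2nn[of t] by (simp add: algebra_simps)
      qed
    qed
    define S where "S = (\<Sum>t. \<eta> t * sqrt (N2 t))"
    have nn: "0 \<le> \<eta> s * sqrt (N2 s)" for s
      using eta_pos[of s] N2nn[of s] by (intro mult_nonneg_nonneg) auto
    have fg: "frob dims (g t) k \<le> sqrt (N2 t)" if "1 \<le> k" "k \<le> L" for t k
    proof -
      have "(\<Sum>i<dims k. \<Sum>j<dims (k-1). (g t k i j)\<^sup>2) \<le> N2 t"
        unfolding N2_def SS_def
        by (rule member_le_sum[where f = "\<lambda>k. \<Sum>i<dims k. \<Sum>j<dims (k-1). (g t k i j)\<^sup>2"]) (use that in \<open>auto intro!: sum_nonneg\<close>)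
      then show ?thesis unfolding frob_def by simp
    qed
    have fb: "frob dims (W t) k \<le> frob dims (W 0) k + (\<Sum>s<t. \<eta> s * sqrt (N2 s))" if "1 \<le> k" "k \<le> L" for t k
    proof (induction t)
      case 0 then show ?case by simp
    next
      case (Suc t)
      have "frob dims (W (Suc t)) k \<le> frob dims (W t) k + \<bar>\<eta> t\<bar> * frob dims (\<lambda>k i j. - g t k i j) k"
        unfolding Wstep by (rule frob_addp)
      also have "\<dots> \<le> frob dims (W t) k + \<eta> t * sqrt (N2 t)"
        using fg[OF that, of t] eta_pos[of t] by (simp add: mult_left_mono)
      finally show ?case using Suc by simp
    qed
    have "maxfrob dims L (W t) \<le> maxfrob dims L (W 0) + S" for t
    proof -
      have "(\<Sum>s<t. \<eta> s * sqrt (N2 s)) \<le> S" unfolding S_def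
        by (rule sum_le_suminf[OF sq]) (use nn in auto)
      then have "frob dims (W t) k \<le> maxfrob dims L (W 0) + S" if "k \<in> {1..L}" for k
        using fb[of k t] fmax[of k "W 0"] that by force
      then show ?thesis unfolding maxfrob_def using L by (subst Max_le_iff) auto
    qed
    then have "bdd_above (range (\<lambda>t. maxfrob dims L (W t)))" by (intro bdd_aboveI) auto
    then show False using part1 by simp
  qed
  have part2: "filterlim (\<lambda>N. \<Sum>t<N. \<eta> t) at_top sequentially"
    unfolding filterlim_at_top
  proof
    fix Z :: real
    obtain N where N: "Z \<le> (\<Sum>t<N. \<eta> t)"
    proof (rule ccontr)
      assume "\<not> thesis"
      then have "(\<Sum>t<T. \<eta> t) \<le> Z" for T
      proof -
        have "\<not> Z \<le> (\<Sum>t<T. \<eta> t)" using that \<open>\<not> thesis\<close> by blast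
        then show ?thesis by linarith
      qed
      then have "summable \<eta>" using eta_pos by (intro summableI_nonneg_bounded) (auto intro: less_imp_le)
      then show False using notsum by simp
    qed
    show "\<forall>\<^sub>F T in sequentially. Z \<le> (\<Sum>t<T. \<eta> t)"
      unfolding eventually_sequentially
    proof (intro exI allI impI)
      fix T assume "N \<le> T"
      then have "(\<Sum>t<N. \<eta> t) \<le> (\<Sum>t<T. \<eta> t)"
        using eta_pos by (intro sum_mono2) (auto intro: less_imp_le)
      then show "Z \<le> (\<Sum>t<T. \<eta> t)" using N by simp
    qed
  qed
  show ?thesis using part1 part2 part3 by blast
qed

end
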